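(* For any $a,b,c$, the 1-2 model on the periodic honeycomb lattice, with signature $(0,c,b,a,a,b,c,0)$ at every vertex, is orthogonally realizable; specifically, taking on every edge the base change matrix $T=\begin{pmatrix}\cos\frac{3\pi}4&\sin\frac{3\pi}4\\-\sin\frac{3\pi}4&\cos\frac{3\pi}4\end{pmatrix}$ yields matchgate signatures satisfying the parity constraint.
   Context: Signatures are indexed by local configurations $000,001,\dots,111$ of the incident $(a,b,c)$-edges. A realization assigns to each edge an invertible $2\times2$ matrix $T_e$ and to each vertex a matchgate signature $m_v$ with $m_v=(T_a\otimes T_b\otimes T_c)r_v$ at black and $m_v=((T_a\otimes T_b\otimes T_c)^t)^{-1}r_v$ at white vertices, each $m_v$ satisfying the parity constraint (vanishing on all binary strings with an even number of $1$'s, or on all with an odd number); the model is orthogonally realizable if a realization exists with all $T_e$ orthogonal. *)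

theory Defs
  imports "HOL-Analysis.Analysis"
begin

text \<open>Local configurations of the three incident (a,b,c)-edges: an index of type
  2 \<times> 2 \<times> 2, where the element 1 of type 2 stands for bit 0 and 2 for bit 1.
  A signature is a vector in real^(2 \<times> 2 \<times> 2).\<close>

definition bit :: "2 \<Rightarrow> bool" where
  "bit i \<longleftrightarrow> i = 2"

definition bit3 :: "2 \<times> 2 \<times> 2 \<Rightarrow> bool \<times> bool \<times> bool" where
  "bit3 s = (case s of (i, j, k) \<Rightarrow> (bit i, bit j, bit k))"

definition weight :: "2 \<times> 2 \<times> 2 \<Rightarrow> nat" where
  "weight s = (case bit3 s of (x, y, z) \<Rightarrow> of_bool x + of_bool y + of_bool z)"

definition parity_ok :: "real ^ (2 \<times> 2 \<times> 2) \<Rightarrow> bool" where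
  "parity_ok m \<longleftrightarrow> (\<forall>s. even (weight s) \<longrightarrow> m $ s = 0) \<or> (\<forall>s. odd (weight s) \<longrightarrow> m $ s = 0)"

definition kron3 :: "real^2^2 \<Rightarrow> real^2^2 \<Rightarrow> real^2^2 \<Rightarrow> real ^ (2 \<times> 2 \<times> 2) ^ (2 \<times> 2 \<times> 2)" where
  "kron3 A B C = (\<chi> s t. case s of (i, j, k) \<Rightarrow> case t of (i', j', k') \<Rightarrow>
       A $ i $ i' * B $ j $ j' * C $ k $ k')"

text \<open>Periodic honeycomb lattice: black vertex at p is joined by its a-edge to the white
  vertex at p, by its b-edge to the white vertex at p + (1,0), by its c-edge to the white
  vertex at p + (0,1).  An edge is named by its black endpoint and its label.\<close>
datatype label = LA | LB | LC
datatype hvertex = Black "int \<times> int" | White "int \<times> int"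
type_synonym hedge = "(int \<times> int) \<times> label"

fun incident :: "hvertex \<Rightarrow> label \<Rightarrow> hedge" where
  "incident (Black p) l = (p, l)"
| "incident (White (x, y)) LA = ((x, y), LA)"
| "incident (White (x, y)) LB = ((x - 1, y), LB)"
| "incident (White (x, y)) LC = ((x, y - 1), LC)"

definition vertex_sig :: "(hedge \<Rightarrow> real^2^2) \<Rightarrow> (hvertex \<Rightarrow> real ^ (2 \<times> 2 \<times> 2)) \<Rightarrow> hvertex
    \<Rightarrow> real ^ (2 \<times> 2 \<times> 2)" where
  "vertex_sig T r v =
     (let K = kron3 (T (incident v LA)) (T (incident v LB)) (T (incident v LC)) in
      case v of Black _ \<Rightarrow> K *v r v
              | White _ \<Rightarrow> matrix_inv (transpose K) *v r v)"

definition is_realization :: "(hedge \<Rightarrow> real^2^2) \<Rightarrow> (hvertex \<Rightarrow> real ^ (2 \<times> 2 \<times> 2)) \<Rightarrow> bool" where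
  "is_realization T r \<longleftrightarrow> (\<forall>e. invertible (T e)) \<and> (\<forall>v. parity_ok (vertex_sig T r v))"

definition orth_realizable :: "(hvertex \<Rightarrow> real ^ (2 \<times> 2 \<times> 2)) \<Rightarrow> bool" where
  "orth_realizable r \<longleftrightarrow> (\<exists>T. is_realization T r \<and> (\<forall>e. orthogonal_matrix (T e)))"

text \<open>The signature (0,c,b,a,a,b,c,0) indexed by 000,001,...,111 (first bit = a-edge).\<close>
definition sig12 :: "real \<Rightarrow> real \<Rightarrow> real \<Rightarrow> real ^ (2 \<times> 2 \<times> 2)" where
  "sig12 a b c = (\<chi> s. case bit3 s of
      (False, False, False) \<Rightarrow> 0 | (False, False, True) \<Rightarrow> c
    | (False, True, False) \<Rightarrow> b | (False, True, True) \<Rightarrow> a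
    | (True, False, False) \<Rightarrow> a | (True, False, True) \<Rightarrow> b
    | (True, True, False) \<Rightarrow> c | (True, True, True) \<Rightarrow> 0)"

definition Tbase :: "real^2^2" where
  "Tbase = vector [vector [cos (3*pi/4), sin (3*pi/4)], vector [- sin (3*pi/4), cos (3*pi/4)]]"

end

theory Submission
  imports Defs
begin

lemma sum_222: "sum f (UNIV :: (2\<times>2\<times>2) set) =
  f (1,1,1) + f (1,1,2) + f (1,2,1) + f (1,2,2) + f (2,1,1) + f (2,1,2) + f (2,2,1) + f (2,2,2)"
proof -
  have "sum f (UNIV :: (2\<times>2\<times>2) set) = (\<Sum>(i,jk)\<in>UNIV\<times>UNIV. f (i,jk))"
    by simp
  also have "\<dots> = (\<Sum>i\<in>UNIV. \<Sum>jk\<in>UNIV. f (i,jk))"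
    by (rule sum.cartesian_product[symmetric])
  also have "\<dots> = (\<Sum>i\<in>UNIV. \<Sum>(j,k)\<in>UNIV\<times>UNIV. f (i,j,k))"
    by simp
  also have "\<dots> = (\<Sum>i\<in>UNIV. \<Sum>j\<in>UNIV. \<Sum>k\<in>UNIV. f (i,j,k))"
    by (simp only: sum.cartesian_product)
  finally show ?thesis by (simp only: sum_2 add.assoc)
qed

lemma cos34: "cos (3*pi/4) = - (sqrt 2 / 2)"
proof -
  have "cos (3*pi/4) = cos (pi - pi/4)" by (rule arg_cong[where f=cos]) simp
  also have "\<dots> = - (sqrt 2 / 2)" by (simp only: cos_diff cos_pi sin_pi cos_45 sin_45)
  finally show ?thesis .
qed

lemma sin34: "sin (3*pi/4) = sqrt 2 / 2"
proof -
  have "sin (3*pi/4) = sin (pi - pi/4)" by (rule arg_cong[where f=sin]) simp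
  also have "\<dots> = sqrt 2 / 2" by (simp only: sin_diff cos_pi sin_pi cos_45 sin_45)
  finally show ?thesis .
qed

definition "s2 = sqrt 2 / 2"

lemma s2sq: "s2 * s2 = 1/2"
  unfolding s2_def by (simp add: field_simps)

lemma Tb: "Tbase $ 1 $ 1 = - s2" "Tbase $ 1 $ 2 = s2" "Tbase $ 2 $ 1 = - s2" "Tbase $ 2 $ 2 = - s2"
  by (simp_all add: Tbase_def cos34 sin34 s2_def)

lemma Tbase_orth: "orthogonal_matrix Tbase"
  unfolding orthogonal_matrix
  apply (simp add: vec_eq_iff matrix_matrix_mult_def transpose_def mat_def sum_2 forall_2 Tb)
  apply (simp add: s2sq[simplified] algebra_simps s2_def)
  done

lemma kron3_entry: "kron3 A B C $ (i,j,k) $ (i',j',k') = A $ i $ i' * B $ j $ j' * C $ k $ k'"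
  by (simp add: kron3_def)

lemma kron3_mult: "kron3 A B C ** kron3 D E F = kron3 (A ** D) (B ** E) (C ** F)"
proof -
  have "(kron3 A B C ** kron3 D E F) $ (i,j,k) $ (i',j',k') = kron3 (A ** D) (B ** E) (C ** F) $ (i,j,k) $ (i',j',k')"
    for i j k i' j' k'
    apply (simp only: matrix_matrix_mult_def vec_lambda_beta kron3_entry sum_222 sum_2)
    apply (simp only: ring_distribs mult.assoc mult.left_commute add.assoc)
    done
  then show ?thesis by (simp add: vec_eq_iff)
qed

lemma kron3_transpose: "transpose (kron3 A B C) = kron3 (transpose A) (transpose B) (transpose C)"
  by (simp add: vec_eq_iff transpose_def kron3_def split: prod.splits)

lemma kron3_mat1: "kron3 (mat 1) (mat 1) (mat 1) = mat 1"
  by (simp add: vec_eq_iff mat_def kron3_def split: prod.splits)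

lemma kron3_orth:
  assumes "orthogonal_matrix A" "orthogonal_matrix B" "orthogonal_matrix C"
  shows "orthogonal_matrix (kron3 A B C)"
  using assms unfolding orthogonal_matrix_def
  by (simp add: kron3_transpose kron3_mult kron3_mat1)

lemma matrix_inv_eq:
  fixes A :: "real^'n^'n"
  assumes "A ** B = mat 1" "B ** A = mat 1"
  shows "matrix_inv A = B"
proof -
  have ex: "\<exists>A'. A ** A' = mat 1 \<and> A' ** A = mat 1" using assms by blast
  define X where "X = matrix_inv A"
  have X: "A ** X = mat 1" "X ** A = mat 1"
    using someI_ex[OF ex] unfolding X_def matrix_inv_def by auto
  have "X = X ** (A ** B)" using assms by simp
  also have "\<dots> = (X ** A) ** B" by (simp add: matrix_mul_assoc)
  also have "\<dots> = B" using X by simp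
  finally show ?thesis unfolding X_def .
qed

definition "KK = kron3 Tbase Tbase Tbase"

lemma KK_orth: "orthogonal_matrix KK"
  unfolding KK_def using kron3_orth Tbase_orth by blast

lemma inv_KK: "matrix_inv (transpose KK) = KK"
  apply (rule matrix_inv_eq)
  using KK_orth unfolding orthogonal_matrix_def by auto

lemma vsig: "vertex_sig (\<lambda>_. Tbase) r v = KK *v r v"
  by (cases v) (simp_all add: vertex_sig_def KK_def[symmetric] inv_KK)

lemma b2: "bit 1 = False" "bit 2 = True" by (simp_all add: bit_def)

lemma sigv: "sig12 a b c $ (1,1,1) = 0" "sig12 a b c $ (1,1,2) = c" "sig12 a b c $ (1,2,1) = b"
  "sig12 a b c $ (1,2,2) = a" "sig12 a b c $ (2,1,1) = a" "sig12 a b c $ (2,1,2) = b"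
  "sig12 a b c $ (2,2,1) = c" "sig12 a b c $ (2,2,2) = 0"
  by (simp_all add: sig12_def bit3_def b2)

lemma KKe: "KK $ (i,j,k) $ (i',j',k') = Tbase $ i $ i' * Tbase $ j $ j' * Tbase $ k $ k'"
  by (simp add: KK_def kron3_def)

lemma KKv: "(KK *v v) $ (i,j,k) =
   Tbase $ i $ 1 * Tbase $ j $ 1 * Tbase $ k $ 1 * v $ (1,1,1) +
   Tbase $ i $ 1 * Tbase $ j $ 1 * Tbase $ k $ 2 * v $ (1,1,2) +
   Tbase $ i $ 1 * Tbase $ j $ 2 * Tbase $ k $ 1 * v $ (1,2,1) +
   Tbase $ i $ 1 * Tbase $ j $ 2 * Tbase $ k $ 2 * v $ (1,2,2) +
   Tbase $ i $ 2 * Tbase $ j $ 1 * Tbase $ k $ 1 * v $ (2,1,1) +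
   Tbase $ i $ 2 * Tbase $ j $ 1 * Tbase $ k $ 2 * v $ (2,1,2) +
   Tbase $ i $ 2 * Tbase $ j $ 2 * Tbase $ k $ 1 * v $ (2,2,1) +
   Tbase $ i $ 2 * Tbase $ j $ 2 * Tbase $ k $ 2 * v $ (2,2,2)"
  by (simp only: matrix_vector_mult_def vec_lambda_beta sum_222 KKe)

lemma wt: "weight (i,j,k) = of_bool (bit i) + of_bool (bit j) + of_bool (bit k)"
  by (simp add: weight_def bit3_def)

lemma e1: "(KK *v sig12 a b c) $ (1,1,1) = 0" by (simp add: KKv sigv Tb)
lemma e2: "(KK *v sig12 a b c) $ (1,2,2) = 0" by (simp add: KKv sigv Tb)
lemma e3: "(KK *v sig12 a b c) $ (2,1,2) = 0" by (simp add: KKv sigv Tb)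
lemma e4: "(KK *v sig12 a b c) $ (2,2,1) = 0" by (simp add: KKv sigv Tb)

lemma par: "parity_ok (KK *v sig12 a b c)"
  unfolding parity_ok_def
proof (rule disjI1, intro allI impI)
  fix s :: "2\<times>2\<times>2"
  assume "even (weight s)"
  moreover obtain i j k where s: "s = (i,j,k)" by (cases s) auto
  ultimately show "(KK *v sig12 a b c) $ s = 0"
    using exhaust_2[of i] exhaust_2[of j] exhaust_2[of k]
    apply (simp only: s wt)
    apply (elim disjE)
    apply (simp_all add: b2 e1 e2 e3 e4)
    done
qed

theorem mainTheorem18:
  fixes a b c :: real
  shows "is_realization (\<lambda>_. Tbase) (\<lambda>_. sig12 a b c) \<and> orth_realizable (\<lambda>_. sig12 a b c)"
proof -
  have r: "is_realization (\<lambda>_. Tbase) (\<lambda>_. sig12 a b c)"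
  proof -
    have "invertible Tbase"
      using Tbase_orth unfolding orthogonal_matrix_def invertible_def by blast
    then show ?thesis unfolding is_realization_def vsig using par by simp
  qed
  moreover have "orth_realizable (\<lambda>_. sig12 a b c)"
    unfolding orth_realizable_def using r Tbase_orth by (intro exI[of _ "\<lambda>_. Tbase"]) simp
  ultimately show ?thesis by blast
qed

end
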